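(* Let $(X,<)$ be a linearly ordered set and define relations on $\beta X$ by $u\trianglelefteq v\iff (u\,\tilde\le\,v\ \vee\ v\,\tilde\ge\,u)$ and $u\equiv v\iff(u\trianglelefteq v\wedge v\trianglelefteq u)$. Then for all $u,v\in\beta X$, $$u\trianglelefteq v\iff\mathrm{supp}(u)\le\mathrm{supp}(v),\qquad u\equiv v\iff\mathrm{supp}(u)=\mathrm{supp}(v).$$ Hence $\trianglelefteq$ is a linear pre-order on $\beta X$, $\equiv$ is an equivalence relation, and the quotient $\beta X/\!\equiv$ with the induced linear order is isomorphic (via $[u]\mapsto\mathrm{supp}(u)$) to the set $s(X)$ of supports of ultrafilters over $X$ with its natural order.
   Context: $\beta X$ is the set of ultrafilters over $X$; $\tilde x=\{S\subseteq X:x\in S\}$. For a binary relation $R$ on $X$, $u\,\tilde R\,v\iff\{x\in X:\{y\in X:x\,R\,y\}\in v\}\in u$. $I_u=\bigcap\{I\in u: I\text{ initial segment of }X\}$, $J_u=\bigcap\{J\in u: J\text{ final segment of }X\}$; for non-principal $u$ exactly one of $I_u\in u$, $J_u\in u$ holds. Supports: $\mathrm{supp}(\tilde x)=\{x\}$; for non-principal $u$, $\mathrm{supp}(u)$ is $I_u$ regarded as a left half-cut if $I_u\in u$, and $J_u$ regarded as a right half-cut if $J_u\in u$; supports are equal iff of the same kind and equal as sets. $s(X)$ is the set of all such supports (all points $\{x\}$, all nonempty initial segments without greatest element as left half-cuts, all nonempty final segments without least element as right half-cuts). Natural linear order on $s(X)$: $\{x\}<\{y\}$ iff $x<y$; $\{x\}<I$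 iff $x\in I$, $I<\{x\}$ iff $x\notin I$; $\{x\}<J$ iff $x\notin J$, $J<\{x\}$ iff $x\in J$; $I<I'$ iff $I\subsetneq I'$; $J<J'$ iff $J\supsetneq J'$; $I<J$ iff $I\cap J=\emptyset$, $J<I$ iff $I\cap J\ne\emptyset$; $\le$ is its reflexive version. *)

theory Defs
  imports Main
begin

definition ultrafilter_on :: "'a set set \<Rightarrow> bool" where
  "ultrafilter_on u \<longleftrightarrow>
     UNIV \<in> u \<and> {} \<notin> u \<and>
     (\<forall>A B. A \<in> u \<and> B \<in> u \<longrightarrow> A \<inter> B \<in> u) \<and>
     (\<forall>A B. A \<in> u \<and> A \<subseteq> B \<longrightarrow> B \<in> u) \<and>
     (\<forall>A. A \<in> u \<or> - A \<in> u)"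

definition betaX :: "'a set set set" where
  "betaX = {u. ultrafilter_on u}"

definition principal :: "'a \<Rightarrow> 'a set set" where
  "principal x = {S. x \<in> S}"

definition ext_rel :: "('a \<Rightarrow> 'a \<Rightarrow> bool) \<Rightarrow> 'a set set \<Rightarrow> 'a set set \<Rightarrow> bool" where
  "ext_rel R u v \<longleftrightarrow> {x. {y. R x y} \<in> v} \<in> u"

definition initial_seg :: "'a::linorder set \<Rightarrow> bool" where
  "initial_seg I \<longleftrightarrow> (\<forall>x y. x \<in> I \<and> y \<le> x \<longrightarrow> y \<in> I)"

definition final_seg :: "'a::linorder set \<Rightarrow> bool" where
  "final_seg J \<longleftrightarrow> (\<forall>x y. x \<in> J \<and> x \<le> y \<longrightarrow> y \<in> J)"

definition I_of :: "'a::linorder set set \<Rightarrow> 'a set" where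
  "I_of u = \<Inter>{I \<in> u. initial_seg I}"

definition J_of :: "'a::linorder set set \<Rightarrow> 'a set" where
  "J_of u = \<Inter>{J \<in> u. final_seg J}"

text \<open>Supports: points, left half-cuts (initial segments), right half-cuts (final segments).\<close>
datatype 'a support = Pt 'a | LCut "'a set" | RCut "'a set"

definition supp :: "'a::linorder set set \<Rightarrow> 'a support" where
  "supp u = (if \<exists>x. u = principal x then Pt (THE x. u = principal x)
             else if I_of u \<in> u then LCut (I_of u) else RCut (J_of u))"

definition sX :: "'a::linorder support set" where
  "sX = range Pt
      \<union> {LCut I | I. I \<noteq> {} \<and> initial_seg I \<and> \<not> (\<exists>m\<in>I. \<forall>x\<in>I. x \<le> m)}
      \<union> {RCut J | J. J \<noteq> {} \<and> final_seg J \<and> \<not> (\<exists>m\<in>J. \<forall>x\<in>J. m \<le> x)}"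

fun supp_less :: "'a::linorder support \<Rightarrow> 'a support \<Rightarrow> bool" where
  "supp_less (Pt x) (Pt y) = (x < y)"
| "supp_less (Pt x) (LCut I) = (x \<in> I)"
| "supp_less (LCut I) (Pt x) = (x \<notin> I)"
| "supp_less (Pt x) (RCut J) = (x \<notin> J)"
| "supp_less (RCut J) (Pt x) = (x \<in> J)"
| "supp_less (LCut I) (LCut I') = (I \<subset> I')"
| "supp_less (RCut J) (RCut J') = (J' \<subset> J)"
| "supp_less (LCut I) (RCut J) = (I \<inter> J = {})"
| "supp_less (RCut J) (LCut I) = (I \<inter> J \<noteq> {})"

definition supp_le :: "'a::linorder support \<Rightarrow> 'a support \<Rightarrow> bool" where
  "supp_le s t \<longleftrightarrow> supp_less s t \<or> s = t"

definition tri_le :: "'a::linorder set set \<Rightarrow> 'a set set \<Rightarrow> bool" where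
  "tri_le u v \<longleftrightarrow> ext_rel (\<le>) u v \<or> ext_rel (\<ge>) v u"

definition tri_eq :: "'a::linorder set set \<Rightarrow> 'a set set \<Rightarrow> bool" where
  "tri_eq u v \<longleftrightarrow> tri_le u v \<and> tri_le v u"

definition tri_eq_rel :: "('a::linorder set set \<times> 'a set set) set" where
  "tri_eq_rel = {(u, v). u \<in> betaX \<and> v \<in> betaX \<and> tri_eq u v}"

end

theory Submission
  imports Defs
begin



definition filt :: "'a set set \<Rightarrow> bool" where
  "filt F \<longleftrightarrow> UNIV \<in> F \<and> {} \<notin> F \<and> (\<forall>A B. A \<in> F \<and> B \<in> F \<longrightarrow> A \<inter> B \<in> F) \<and>
     (\<forall>A B. A \<in> F \<and> A \<subseteq> B \<longrightarrow> B \<in> F)"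

lemma uf_exists:
  assumes "filt B" shows "\<exists>u. ultrafilter_on u \<and> B \<subseteq> u"
proof -
  let ?A = "{F. filt F \<and> B \<subseteq> F}"
  have "\<forall>C\<in>chains ?A. \<exists>U\<in>?A. \<forall>X\<in>C. X \<subseteq> U"
  proof
    fix C assume C: "C \<in> chains ?A"
    show "\<exists>U\<in>?A. \<forall>X\<in>C. X \<subseteq> U"
    proof (cases "C = {}")
      case True then show ?thesis using assms by auto
    next
      case False
      have sub: "C \<subseteq> ?A" and ch: "\<forall>X\<in>C. \<forall>Y\<in>C. X \<subseteq> Y \<or> Y \<subseteq> X"
        using C unfolding chains_def chain_subset_def by auto
      have "filt (\<Union>C)"
        unfolding filt_def
      proof (intro conjI allI impI)
        show "UNIV \<in> \<Union>C" using False sub by (auto simp: filt_def)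
        show "{} \<notin> \<Union>C" using sub by (auto simp: filt_def)
      next
        fix X Y assume "X \<in> \<Union>C \<and> Y \<in> \<Union>C"
        then obtain F G where F: "F \<in> C" "X \<in> F" and G: "G \<in> C" "Y \<in> G" by auto
        from ch F G have "F \<subseteq> G \<or> G \<subseteq> F" by auto
        then show "X \<inter> Y \<in> \<Union>C"
        proof
          assume "F \<subseteq> G" then show ?thesis using F G sub unfolding filt_def by blast
        next
          assume "G \<subseteq> F" then show ?thesis using F G sub unfolding filt_def by blast
        qed
      next
        fix X Y assume "X \<in> \<Union>C \<and> X \<subseteq> Y"
        then show "Y \<in> \<Union>C" using sub unfolding filt_def by blast
      qed
      moreover have "B \<subseteq> \<Union>C" using False sub by auto
      ultimately show ?thesis by auto
    qed
  qed
  from Zorn_Lemma2[OF this] obtain M where M: "M \<in> ?A" and mx: "\<forall>X\<in>?A. M \<subseteq> X \<longrightarrow> X = M"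
    by blast
  have "ultrafilter_on M"
    unfolding ultrafilter_on_def
  proof (intro conjI allI)
    show "UNIV \<in> M" "{} \<notin> M" using M by (auto simp: filt_def)
    show "\<And>X Y. X \<in> M \<and> Y \<in> M \<longrightarrow> X \<inter> Y \<in> M" "\<And>X Y. X \<in> M \<and> X \<subseteq> Y \<longrightarrow> Y \<in> M"
      using M by (auto simp: filt_def)
  next
    fix X
    show "X \<in> M \<or> - X \<in> M"
    proof (rule ccontr)
      assume nn: "\<not> (X \<in> M \<or> - X \<in> M)"
      let ?M' = "{S. \<exists>m\<in>M. m \<inter> X \<subseteq> S}"
      have fM: "filt M" using M by auto
      have "filt ?M'"
        unfolding filt_def
      proof (intro conjI allI impI)
        show "UNIV \<in> ?M'" using fM by (auto simp: filt_def)
        show "{} \<notin> ?M'"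
        proof
          assume "{} \<in> ?M'"
          then obtain m where "m \<in> M" "m \<inter> X \<subseteq> {}" by auto
          then have "m \<subseteq> - X" by auto
          with \<open>m \<in> M\<close> fM nn show False unfolding filt_def by blast
        qed
      next
        fix S T assume "S \<in> ?M' \<and> T \<in> ?M'"
        then obtain m n where "m \<in> M" "m \<inter> X \<subseteq> S" "n \<in> M" "n \<inter> X \<subseteq> T" by auto
        then show "S \<inter> T \<in> ?M'" using fM unfolding filt_def
          by (intro CollectI bexI[of _ "m \<inter> n"]) auto
      next
        fix S T assume "S \<in> ?M' \<and> S \<subseteq> T" then show "T \<in> ?M'" by auto
      qed
      moreover have "M \<subseteq> ?M'" by auto
      moreover have "B \<subseteq> ?M'" using M by auto
      ultimately have "?M' = M" using mx by auto
      moreover have "X \<in> ?M'" using fM by (auto simp: filt_def)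
      ultimately show False using nn by auto
    qed
  qed
  then show ?thesis using M by auto
qed




lemma uf_up: "ultrafilter_on u \<Longrightarrow> A \<in> u \<Longrightarrow> A \<subseteq> B \<Longrightarrow> B \<in> u"
  unfolding ultrafilter_on_def by blast
lemma uf_int: "ultrafilter_on u \<Longrightarrow> A \<in> u \<Longrightarrow> B \<in> u \<Longrightarrow> A \<inter> B \<in> u"
  unfolding ultrafilter_on_def by blast
lemma uf_empty: "ultrafilter_on u \<Longrightarrow> {} \<notin> u"
  unfolding ultrafilter_on_def by blast
lemma uf_compl: "ultrafilter_on u \<Longrightarrow> (- A \<in> u) \<longleftrightarrow> A \<notin> u"
proof -
  assume u: "ultrafilter_on u"
  have "\<not> (- A \<in> u \<and> A \<in> u)"
  proof
    assume "- A \<in> u \<and> A \<in> u" then have "{} \<in> u" using uf_int[OF u, of A "-A"] by simp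
    then show False using uf_empty[OF u] by simp
  qed
  moreover have "A \<notin> u \<longrightarrow> - A \<in> u" using u unfolding ultrafilter_on_def by blast
  ultimately show ?thesis by blast
qed
lemma uf_disj: "ultrafilter_on u \<Longrightarrow> A \<in> u \<Longrightarrow> B \<in> u \<Longrightarrow> A \<inter> B = {} \<Longrightarrow> False"
  using uf_int uf_empty by metis

lemma principal_uf: "ultrafilter_on (principal x)"
  unfolding ultrafilter_on_def principal_def by auto

lemma principal_inj: "principal x = principal y \<Longrightarrow> x = y"
  unfolding principal_def by (metis (mono_tags, lifting) mem_Collect_eq singletonD singletonI)

lemma single_principal: assumes u: "ultrafilter_on u" and x: "{x} \<in> u" shows "u = principal x"
proof (intro set_eqI iffI)
  fix S assume "S \<in> u"
  then have "x \<in> S" using uf_disj[OF u x, of S] by auto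
  then show "S \<in> principal x" by (simp add: principal_def)
next
  fix S assume "S \<in> principal x"
  then have "{x} \<subseteq> S" by (simp add: principal_def)
  then show "S \<in> u" using uf_up[OF u x] by blast
qed

definition Lu :: "'a::linorder set set \<Rightarrow> 'a set" where
  "Lu u = {x. {y. x < y} \<in> u}"

lemma init_comp: "initial_seg (A::'a::linorder set) \<Longrightarrow> initial_seg B \<Longrightarrow> A \<subseteq> B \<or> B \<subseteq> A"
  unfolding initial_seg_def by (meson linear subsetI)

lemma Lu_init: assumes u: "ultrafilter_on u" shows "initial_seg (Lu u)"
  unfolding initial_seg_def Lu_def
proof (intro allI impI)
  fix x y :: 'a assume h: "x \<in> {x. {y. x < y} \<in> u} \<and> y \<le> x"
  have "{z. x < z} \<subseteq> {z. y < z}" using h by auto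
  then show "y \<in> {x. {y. x < y} \<in> u}" using h uf_up[OF u, of "{z. x < z}" "{z. y < z}"] by auto
qed

lemma notLu: assumes u: "ultrafilter_on u" shows "x \<notin> Lu u \<longleftrightarrow> {y. y \<le> x} \<in> u"
proof -
  have "- {y. x < y} = {y. y \<le> x}" by auto
  then show ?thesis using uf_compl[OF u, of "{y. x < y}"] unfolding Lu_def by auto
qed

lemma Q_eq: assumes u: "ultrafilter_on u" shows "{x. {y. y \<le> x} \<in> u} = - Lu u"
  using notLu[OF u] by auto

lemma P_mem: assumes v: "ultrafilter_on v"
  shows "{y. x \<le> y} \<in> v \<longleftrightarrow> x \<in> Lu v \<or> {x} \<in> v"
proof
  assume h: "{y. x \<le> y} \<in> v"
  show "x \<in> Lu v \<or> {x} \<in> v"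
  proof (rule ccontr)
    assume "\<not> (x \<in> Lu v \<or> {x} \<in> v)"
    then have "{y. y \<le> x} \<in> v" using notLu[OF v] by auto
    from uf_int[OF v h this] have "{y. x \<le> y} \<inter> {y. y \<le> x} \<in> v" .
    moreover have "{y. x \<le> y} \<inter> {y. y \<le> x} \<subseteq> {x}" by auto
    ultimately have "{x} \<in> v" using uf_up[OF v] by blast
    with \<open>\<not> _\<close> show False by auto
  qed
next
  assume "x \<in> Lu v \<or> {x} \<in> v"
  then show "{y. x \<le> y} \<in> v"
    by (auto simp: Lu_def intro: uf_up[OF v])
qed

lemma Kmem: assumes u: "ultrafilter_on u" and K: "initial_seg K"
  shows "K \<in> u \<longleftrightarrow> (\<not> K \<subseteq> Lu u \<or> (K = Lu u \<and> Lu u \<in> u))"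
proof (cases "K \<subseteq> Lu u")
  case True
  show ?thesis
  proof (cases "K = Lu u")
    case False
    with True obtain x where x: "x \<in> Lu u" "x \<notin> K" by auto
    have "K \<subseteq> {y. y < x}" using K x unfolding initial_seg_def by (meson linorder_not_le mem_Collect_eq subsetI)
    moreover have "{y. x < y} \<in> u" using x Lu_def by auto
    ultimately have "K \<notin> u" using uf_disj[OF u, of K "{y. x < y}"] by force
    then show ?thesis using True False by auto
  qed (auto)
next
  case False
  then obtain x where x: "x \<in> K" "x \<notin> Lu u" by auto
  then have "{y. y \<le> x} \<in> u" using notLu[OF u] by auto
  moreover have "{y. y \<le> x} \<subseteq> K" using K x unfolding initial_seg_def by auto
  ultimately show ?thesis using uf_up[OF u] False by blast
qed

lemma Lu_principal: "Lu (principal z) = {y. y < z}"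
  unfolding Lu_def principal_def by auto

lemma type0_nomax: assumes u: "ultrafilter_on u" and L: "Lu u \<in> u" and z: "z \<in> Lu u"
  shows "\<exists>w\<in>Lu u. z < w"
proof -
  have "{y. z < y} \<in> u" using z Lu_def by auto
  from uf_int[OF u L this] have "Lu u \<inter> {y. z < y} \<noteq> {}" using uf_empty[OF u] by auto
  then show ?thesis by auto
qed

lemma type2_lt: assumes u: "ultrafilter_on u" and np: "\<not> (\<exists>z. u = principal z)" and x: "x \<notin> Lu u"
  shows "{y. y < x} \<in> u"
proof -
  have a: "{y. y \<le> x} \<in> u" using notLu[OF u] x by auto
  have "{x} \<notin> u" using np single_principal[OF u] by auto
  then have "- {x} \<in> u" using uf_compl[OF u] by auto
  from uf_int[OF u a this] have "{y. y \<le> x} \<inter> - {x} \<in> u" .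
  moreover have "{y. y \<le> x} \<inter> - {x} \<subseteq> {y. y < x}" by auto
  ultimately show ?thesis using uf_up[OF u] by blast
qed




definition tag :: "'a::linorder set set \<Rightarrow> nat" where
  "tag u = (if Lu u \<in> u then 0 else if \<exists>z. u = principal z then 1 else 2)"

lemma principal_tag: "tag (principal z) = 1"
  unfolding tag_def Lu_principal by (auto simp: principal_def)

lemma tri_le_key:
  assumes u: "ultrafilter_on u" and v: "ultrafilter_on v"
  shows "tri_le u v \<longleftrightarrow> (Lu u \<subset> Lu v \<or> (Lu u = Lu v \<and> tag u \<le> tag v))"
proof -
  have "{x. {y. y \<le> x} \<in> u} = - Lu u" by (rule Q_eq[OF u])
  then have "ext_rel (\<ge>) v u \<longleftrightarrow> - Lu u \<in> v" unfolding ext_rel_def by simp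
  also have "\<dots> \<longleftrightarrow> Lu u \<notin> v" using uf_compl[OF v] by simp
  also have "\<dots> \<longleftrightarrow> Lu u \<subseteq> Lu v \<and> (Lu u = Lu v \<longrightarrow> Lu v \<notin> v)"
    using Kmem[OF v Lu_init[OF u]] by auto
  finally have B: "ext_rel (\<ge>) v u \<longleftrightarrow> Lu u \<subseteq> Lu v \<and> (Lu u = Lu v \<longrightarrow> Lu v \<notin> v)" .
  have cmp: "Lu u \<subseteq> Lu v \<or> Lu v \<subseteq> Lu u" using init_comp[OF Lu_init[OF u] Lu_init[OF v]] .
  show ?thesis
  proof (cases "\<exists>z. v = principal z")
    case True
    then obtain z where vz: "v = principal z" by auto
    have "{x. {y. x \<le> y} \<in> principal z} = {x. x \<le> z}" by (auto simp: principal_def)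
    then have "ext_rel (\<le>) u v \<longleftrightarrow> {x. x \<le> z} \<in> u" unfolding ext_rel_def vz by simp
    also have "\<dots> \<longleftrightarrow> (\<not> {x. x \<le> z} \<subseteq> Lu u \<or> ({x. x \<le> z} = Lu u \<and> Lu u \<in> u))"
      by (rule Kmem[OF u]) (auto simp: initial_seg_def)
    also have "\<dots> \<longleftrightarrow> z \<notin> Lu u"
    proof -
      have "\<not> ({x. x \<le> z} = Lu u \<and> Lu u \<in> u)"
      proof
        assume h: "{x. x \<le> z} = Lu u \<and> Lu u \<in> u"
        then have "z \<in> Lu u" by auto
        from type0_nomax[OF u _ this] h obtain w where "w \<in> Lu u" "z < w" by auto
        then have "w \<in> {x. x \<le> z}" using h by simp
        with \<open>z < w\<close> show False by simp
      qed
      moreover have "\<not> {x. x \<le> z} \<subseteq> Lu u \<longleftrightarrow> z \<notin> Lu u"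
        using Lu_init[OF u] unfolding initial_seg_def by auto
      ultimately show ?thesis by auto
    qed
    finally have A: "ext_rel (\<le>) u v \<longleftrightarrow> z \<notin> Lu u" .
    have Lv: "Lu v = {y. y < z}" using vz Lu_principal by simp
    have zi: "z \<notin> Lu u \<longleftrightarrow> Lu u \<subseteq> {y. y < z}"
      using Lu_init[OF u] unfolding initial_seg_def by (auto simp: not_less) (meson not_le)
    have tv: "tag v = 1" using vz principal_tag by simp
    have nt2: "Lu u = {y. y < z} \<Longrightarrow> tag u \<le> 1"
    proof (rule ccontr)
      assume e: "Lu u = {y. y < z}" and "\<not> tag u \<le> 1"
      then have n0: "Lu u \<notin> u" and np: "\<not> (\<exists>z. u = principal z)" unfolding tag_def by (auto split: if_splits)
      have "z \<notin> Lu u" using e by auto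
      from type2_lt[OF u np this] e n0 show False by simp
    qed
    show ?thesis unfolding tri_le_def A B Lv tv using zi nt2 by auto
  next
    case False
    have "{x. {y. x \<le> y} \<in> v} = Lu v"
      using P_mem[OF v] single_principal[OF v] False by blast
    then have "ext_rel (\<le>) u v \<longleftrightarrow> Lu v \<in> u" unfolding ext_rel_def by simp
    also have "\<dots> \<longleftrightarrow> (\<not> Lu v \<subseteq> Lu u \<or> (Lu v = Lu u \<and> Lu u \<in> u))"
      using Kmem[OF u Lu_init[OF v]] .
    finally have A: "ext_rel (\<le>) u v \<longleftrightarrow> (\<not> Lu v \<subseteq> Lu u \<or> (Lu v = Lu u \<and> Lu u \<in> u))" .
    have tv: "tag v = (if Lu v \<in> v then 0 else 2)" using False unfolding tag_def by auto
    show ?thesis unfolding tri_le_def A B using cmp tv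
      by (auto simp: tag_def)
  qed
qed




fun skey :: "'a::linorder support \<Rightarrow> 'a set \<times> nat" where
  "skey (Pt x) = ({y. y < x}, 1)"
| "skey (LCut I) = (I, 0)"
| "skey (RCut J) = (- J, 2)"

lemma lessset_inj: "{y::'a::linorder. y < x} = {y. y < z} \<Longrightarrow> x = z"
  by (metis linorder_neqE mem_Collect_eq order_less_irrefl)

lemma skey_inj: "skey s = skey t \<Longrightarrow> s = t"
  by (cases s; cases t) (auto dest: lessset_inj)

lemma final_compl: "final_seg J \<Longrightarrow> initial_seg (- J)"
  unfolding final_seg_def initial_seg_def by auto
lemma init_compl: "initial_seg I \<Longrightarrow> final_seg (- I)"
  unfolding final_seg_def initial_seg_def by auto

lemma sX_Pt: "Pt x \<in> sX" unfolding sX_def by simp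
lemma sX_L: "I \<noteq> {} \<Longrightarrow> initial_seg I \<Longrightarrow> \<not>(\<exists>m\<in>I. \<forall>x\<in>I. x \<le> m) \<Longrightarrow> LCut I \<in> sX"
  unfolding sX_def by (intro UnI1 UnI2 CollectI exI[of _ I]) simp
lemma sX_R: "J \<noteq> {} \<Longrightarrow> final_seg J \<Longrightarrow> \<not>(\<exists>m\<in>J. \<forall>x\<in>J. m \<le> x) \<Longrightarrow> RCut J \<in> sX"
  unfolding sX_def by (intro UnI2 CollectI exI[of _ J]) simp

lemma I_of_np: assumes u: "ultrafilter_on u" and np: "\<not> (\<exists>z. u = principal z)"
  shows "I_of u = Lu u"
proof
  show "I_of u \<subseteq> Lu u"
  proof
    fix x assume x: "x \<in> I_of u"
    show "x \<in> Lu u"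
    proof (rule ccontr)
      assume "x \<notin> Lu u"
      from type2_lt[OF u np this] have "{y. y < x} \<in> u" .
      moreover have "initial_seg {y. y < x}" unfolding initial_seg_def by auto
      ultimately have "I_of u \<subseteq> {y. y < x}" unfolding I_of_def by blast
      with x show False by auto
    qed
  qed
next
  show "Lu u \<subseteq> I_of u" unfolding I_of_def
  proof (rule Inter_greatest)
    fix K assume "K \<in> {I \<in> u. initial_seg I}"
    then have K: "K \<in> u" "initial_seg K" by auto
    then have "\<not> K \<subseteq> Lu u \<or> K = Lu u" using Kmem[OF u K(2)] by auto
    then show "Lu u \<subseteq> K" using init_comp[OF K(2) Lu_init[OF u]] by auto
  qed
qed

lemma J_of_np: assumes u: "ultrafilter_on u" and n0: "Lu u \<notin> u"
  shows "J_of u = - Lu u"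
proof
  have "- Lu u \<in> u" using uf_compl[OF u] n0 by simp
  moreover have "final_seg (- Lu u)" using init_compl[OF Lu_init[OF u]] .
  ultimately show "J_of u \<subseteq> - Lu u" unfolding J_of_def by (intro Inter_lower) simp
next
  show "- Lu u \<subseteq> J_of u" unfolding J_of_def
  proof (rule Inter_greatest)
    fix M assume "M \<in> {J \<in> u. final_seg J}"
    then have M: "M \<in> u" "final_seg M" by auto
    have "- M \<notin> u" using uf_compl[OF u, of M] M by simp
    then have "- M \<subseteq> Lu u" using Kmem[OF u final_compl[OF M(2)]] by auto
    then show "- Lu u \<subseteq> M" by auto
  qed
qed

lemma supp_principal: "supp (principal z) = Pt z"
proof -
  have ex: "\<exists>x. principal z = principal x" by blast
  have "(THE x. principal z = principal x) = z" by (rule the_equality) (auto dest: principal_inj)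
  then show ?thesis unfolding supp_def if_P[OF ex] by simp
qed

lemma supp_key: assumes u: "ultrafilter_on u"
  shows "skey (supp u) = (Lu u, tag u) \<and> supp u \<in> sX"
proof (cases "\<exists>z. u = principal z")
  case True
  then obtain z where z: "u = principal z" by auto
  show ?thesis unfolding z supp_principal Lu_principal principal_tag by (simp add: sX_Pt)
next
  case np: False
  have I: "I_of u = Lu u" by (rule I_of_np[OF u np])
  show ?thesis
  proof (cases "Lu u \<in> u")
    case True
    have s: "supp u = LCut (Lu u)" unfolding supp_def if_not_P[OF np] using True I by simp
    have ne: "Lu u \<noteq> {}" using True uf_empty[OF u] by auto
    have nm: "\<not> (\<exists>m\<in>Lu u. \<forall>x\<in>Lu u. x \<le> m)"
    proof
      assume "\<exists>m\<in>Lu u. \<forall>x\<in>Lu u. x \<le> m"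
      then obtain m where m: "m \<in> Lu u" "\<forall>x\<in>Lu u. x \<le> m" by blast
      from type0_nomax[OF u True m(1)] obtain w where "w \<in> Lu u" "m < w" by blast
      with m(2) show False by (meson leD)
    qed
    have "supp u \<in> sX" unfolding s by (rule sX_L[OF ne Lu_init[OF u] nm])
    then show ?thesis unfolding s using True by (simp add: tag_def)
  next
    case False
    have s: "supp u = RCut (- Lu u)" unfolding supp_def if_not_P[OF np] using False I J_of_np[OF u False] by simp
    have c: "- Lu u \<in> u" using uf_compl[OF u] False by simp
    then have ne: "- Lu u \<noteq> {}" using uf_empty[OF u] by auto
    have nm: "\<not> (\<exists>m\<in>- Lu u. \<forall>x\<in>- Lu u. m \<le> x)"
    proof
      assume "\<exists>m\<in>- Lu u. \<forall>x\<in>- Lu u. m \<le> x"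
      then obtain m where m: "m \<notin> Lu u" "\<forall>x\<in>- Lu u. m \<le> x" by auto
      from type2_lt[OF u np m(1)] have a: "{y. y < m} \<in> u" .
      have "\<And>y. y < m \<Longrightarrow> y \<notin> Lu u \<Longrightarrow> False" using m(2) by (meson ComplI leD)
      then have d: "{y. y < m} \<inter> - Lu u = {}" by blast
      show False by (rule uf_disj[OF u a c d])
    qed
    have "supp u \<in> sX" unfolding s by (rule sX_R[OF ne init_compl[OF Lu_init[OF u]] nm])
    then show ?thesis unfolding s using False np by (simp add: tag_def)
  qed
qed

definition keyle :: "'a set \<times> nat \<Rightarrow> 'a set \<times> nat \<Rightarrow> bool" where
  "keyle p q \<longleftrightarrow> fst p \<subset> fst q \<or> (fst p = fst q \<and> snd p \<le> snd q)"




lemma sX_cases: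
  assumes "s \<in> sX"
  obtains x where "s = Pt x"
  | I where "s = LCut I" "I \<noteq> {}" "initial_seg I" "\<not> (\<exists>m\<in>I. \<forall>x\<in>I. x \<le> m)"
  | J where "s = RCut J" "J \<noteq> {}" "final_seg J" "\<not> (\<exists>m\<in>J. \<forall>x\<in>J. m \<le> x)"
  using assms unfolding sX_def by blast

lemma kPP: "supp_le (Pt x) (Pt y) \<longleftrightarrow> keyle (skey (Pt x)) (skey (Pt (y::'a::linorder)))"
  unfolding supp_le_def keyle_def by (auto dest: lessset_inj)

lemma kPL: assumes I: "initial_seg I"
  shows "supp_le (Pt x) (LCut I) \<longleftrightarrow> keyle (skey (Pt x)) (skey (LCut (I::'a::linorder set)))"
proof -
  have "x \<in> I \<longleftrightarrow> {y. y < x} \<subset> I"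
  proof
    assume x: "x \<in> I"
    have "{y. y < x} \<subseteq> I"
    proof
      fix y assume "y \<in> {y. y < x}"
      then have "y \<le> x" by simp
      then show "y \<in> I" using I x unfolding initial_seg_def by blast
    qed
    moreover have "x \<notin> {y. y < x}" by simp
    ultimately show "{y. y < x} \<subset> I" using x by blast
  next
    assume "{y. y < x} \<subset> I"
    then obtain y where y: "y \<in> I" "\<not> y < x" by blast
    then have "x \<le> y" by simp
    then show "x \<in> I" using I y(1) unfolding initial_seg_def by blast
  qed
  then show ?thesis unfolding supp_le_def keyle_def by (simp add: subset_iff_psubset_eq)
qed

lemma kLP: assumes I: "initial_seg I"
  shows "supp_le (LCut I) (Pt x) \<longleftrightarrow> keyle (skey (LCut I)) (skey (Pt (x::'a::linorder)))"
proof -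
  have "x \<notin> I \<longleftrightarrow> I \<subseteq> {y. y < x}"
  proof
    assume x: "x \<notin> I"
    show "I \<subseteq> {y. y < x}"
    proof
      fix y assume "y \<in> I"
      then show "y \<in> {y. y < x}" using I x unfolding initial_seg_def by (meson mem_Collect_eq not_less)
    qed
  qed auto
  then show ?thesis unfolding supp_le_def keyle_def by (simp add: subset_iff_psubset_eq)
qed

lemma kPR: assumes J: "final_seg J" and nm: "\<not> (\<exists>m\<in>J. \<forall>x\<in>J. m \<le> x)"
  shows "supp_le (Pt x) (RCut J) \<longleftrightarrow> keyle (skey (Pt x)) (skey (RCut (J::'a::linorder set)))"
proof -
  have "x \<notin> J \<longleftrightarrow> {y. y < x} \<subseteq> - J"
  proof
    assume x: "x \<notin> J"
    show "{y. y < x} \<subseteq> - J"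
    proof
      fix y assume "y \<in> {y. y < x}"
      then have "y \<le> x" by simp
      then show "y \<in> - J" using J x unfolding final_seg_def by blast
    qed
  next
    assume h: "{y. y < x} \<subseteq> - J"
    show "x \<notin> J"
    proof
      assume x: "x \<in> J"
      have "\<forall>z\<in>J. x \<le> z" using h by (meson ComplD mem_Collect_eq not_less subsetD)
      with x nm show False by blast
    qed
  qed
  then show ?thesis unfolding supp_le_def keyle_def by (simp add: subset_iff_psubset_eq)
qed

lemma kRP: assumes J: "final_seg J" and nm: "\<not> (\<exists>m\<in>J. \<forall>x\<in>J. m \<le> x)"
  shows "supp_le (RCut J) (Pt x) \<longleftrightarrow> keyle (skey (RCut J)) (skey (Pt (x::'a::linorder)))"
proof -
  have "x \<in> J \<longleftrightarrow> - J \<subset> {y. y < x}"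
  proof
    assume x: "x \<in> J"
    have sub: "- J \<subseteq> {y. y < x}"
    proof
      fix z assume "z \<in> - J"
      then show "z \<in> {y. y < x}" using J x unfolding final_seg_def by (meson ComplD mem_Collect_eq not_less)
    qed
    have "- J \<noteq> {y. y < x}"
    proof
      assume e: "- J = {y. y < x}"
      have "\<forall>z\<in>J. x \<le> z"
      proof
        fix z assume "z \<in> J"
        then have "z \<notin> {y. y < x}" using e by blast
        then show "x \<le> z" by simp
      qed
      with x nm show False by blast
    qed
    with sub show "- J \<subset> {y. y < x}" by blast
  next
    assume "- J \<subset> {y. y < x}"
    then show "x \<in> J" by auto
  qed
  then show ?thesis unfolding supp_le_def keyle_def by (simp add: subset_iff_psubset_eq)
qed

lemma kLL: "supp_le (LCut I) (LCut I') \<longleftrightarrow> keyle (skey (LCut I)) (skey (LCut (I'::'a::linorder set)))"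
  unfolding supp_le_def keyle_def by auto

lemma kRR: "supp_le (RCut J) (RCut J') \<longleftrightarrow> keyle (skey (RCut J)) (skey (RCut (J'::'a::linorder set)))"
  unfolding supp_le_def keyle_def by auto

lemma kLR: "supp_le (LCut I) (RCut J) \<longleftrightarrow> keyle (skey (LCut I)) (skey (RCut (J::'a::linorder set)))"
  unfolding supp_le_def keyle_def by auto

lemma kRL: "initial_seg I \<Longrightarrow> final_seg J \<Longrightarrow> supp_le (RCut J) (LCut I) \<longleftrightarrow> keyle (skey (RCut J)) (skey (LCut (I::'a::linorder set)))"
  using init_comp[of I "-J"] final_compl[of J] unfolding supp_le_def keyle_def by auto




lemma sle: assumes s: "s \<in> sX" and t: "t \<in> sX"
  shows "supp_le s t \<longleftrightarrow> keyle (skey s) (skey (t::'a::linorder support))"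
  using s
proof (cases rule: sX_cases)
  case (1 x)
  from t show ?thesis
    by (cases rule: sX_cases) (simp_all add: 1 kPP kPL kPR)
next
  case (2 I)
  from t show ?thesis
    by (cases rule: sX_cases) (simp_all add: 2 kLP kLL kLR)
next
  case (3 J)
  from t show ?thesis
    by (cases rule: sX_cases) (simp_all add: 3 kRP kRL kRR)
qed

lemma tri_supp: assumes u: "ultrafilter_on u" and v: "ultrafilter_on v"
  shows "tri_le u v \<longleftrightarrow> supp_le (supp u) (supp v)"
proof -
  have "supp_le (supp u) (supp v) \<longleftrightarrow> keyle (Lu u, tag u) (Lu v, tag v)"
    using sle[of "supp u" "supp v"] supp_key[OF u] supp_key[OF v] by simp
  then show ?thesis using tri_le_key[OF u v] unfolding keyle_def by simp
qed

lemma tri_eq_supp: assumes u: "ultrafilter_on u" and v: "ultrafilter_on v"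
  shows "tri_eq u v \<longleftrightarrow> supp u = supp v"
proof -
  have "tri_eq u v \<longleftrightarrow> (Lu u, tag u) = (Lu v, tag v)"
    unfolding tri_eq_def tri_le_key[OF u v] tri_le_key[OF v u] by auto
  also have "\<dots> \<longleftrightarrow> skey (supp u) = skey (supp v)" using supp_key[OF u] supp_key[OF v] by simp
  also have "\<dots> \<longleftrightarrow> supp u = supp v" using skey_inj by metis
  finally show ?thesis .
qed

lemma tri_refl: "ultrafilter_on u \<Longrightarrow> tri_le u u"
  using tri_le_key by blast

lemma tri_trans: assumes u: "ultrafilter_on u" and v: "ultrafilter_on v" and w: "ultrafilter_on w"
  and "tri_le u v" "tri_le v w" shows "tri_le u w"
  using assms(4,5) unfolding tri_le_key[OF u v] tri_le_key[OF v w] tri_le_key[OF u w]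
  by auto

lemma tri_total: assumes u: "ultrafilter_on u" and v: "ultrafilter_on v"
  shows "tri_le u v \<or> tri_le v u"
  unfolding tri_le_key[OF u v] tri_le_key[OF v u]
  using init_comp[OF Lu_init[OF u] Lu_init[OF v]] by auto

lemma surj_supp: assumes s: "s \<in> sX" shows "\<exists>u. ultrafilter_on u \<and> supp u = (s::'a::linorder support)"
  using s
proof (cases rule: sX_cases)
  case (1 x)
  show ?thesis by (intro exI[of _ "principal x"]) (simp add: principal_uf supp_principal 1)
next
  case (2 I)
  let ?B = "{S. \<exists>x\<in>I. I \<inter> {y. x < y} \<subseteq> S}"
  have nomax: "\<And>x. x \<in> I \<Longrightarrow> \<exists>y\<in>I. x < y" using 2(4) by (meson not_le)
  have "filt ?B" unfolding filt_def
  proof (intro conjI allI impI)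
    show "UNIV \<in> ?B" using 2(2) by auto
    show "{} \<notin> ?B"
    proof
      assume "{} \<in> ?B"
      then obtain x where x: "x \<in> I" "I \<inter> {y. x < y} \<subseteq> {}" by blast
      from nomax[OF x(1)] obtain y where "y \<in> I" "x < y" by blast
      with x(2) show False by blast
    qed
  next
    fix A C assume "A \<in> ?B \<and> C \<in> ?B"
    then obtain a c where a: "a \<in> I" "I \<inter> {y. a < y} \<subseteq> A" and c: "c \<in> I" "I \<inter> {y. c < y} \<subseteq> C" by blast
    have "max a c \<in> I" using a c by (simp add: max_def)
    moreover have "I \<inter> {y. max a c < y} \<subseteq> A \<inter> C" using a c by auto
    ultimately show "A \<inter> C \<in> ?B" by (intro CollectI bexI)
  next
    fix A C assume "A \<in> ?B \<and> A \<subseteq> C" then show "C \<in> ?B" by blast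
  qed
  from uf_exists[OF this] obtain u where u: "ultrafilter_on u" and Bu: "?B \<subseteq> u" by blast
  obtain x0 where x0: "x0 \<in> I" using 2(2) by blast
  have "I \<in> ?B" using x0 by (intro CollectI bexI[of _ x0]) auto
  then have Iu: "I \<in> u" using Bu by blast
  have "Lu u = I"
  proof
    show "I \<subseteq> Lu u"
    proof
      fix x assume "x \<in> I"
      then have "{y. x < y} \<in> ?B" by (intro CollectI bexI[of _ x]) auto
      then show "x \<in> Lu u" using Bu unfolding Lu_def by blast
    qed
  next
    show "Lu u \<subseteq> I"
    proof
      fix x assume x: "x \<in> Lu u"
      show "x \<in> I"
      proof (rule ccontr)
        assume "x \<notin> I"
        have d: "I \<inter> {y. x < y} = {}"
        proof (rule ccontr)
          assume "I \<inter> {y. x < y} \<noteq> {}"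
          then obtain y where "y \<in> I" "x < y" by blast
          then have "x \<le> y" "y \<in> I" by simp_all
          then have "x \<in> I" using 2(3) unfolding initial_seg_def by blast
          with \<open>x \<notin> I\<close> show False by blast
        qed
        have "{y. x < y} \<in> u" using x unfolding Lu_def by simp
        from uf_disj[OF u Iu this d] show False .
      qed
    qed
  qed
  then have "skey (supp u) = (I, 0)" using supp_key[OF u] Iu by (simp add: tag_def)
  then have "skey (supp u) = skey s" using 2(1) by simp
  then show ?thesis using skey_inj u by blast
next
  case (3 J)
  let ?B = "{S. \<exists>x\<in>J. J \<inter> {y. y < x} \<subseteq> S}"
  have nomin: "\<And>x. x \<in> J \<Longrightarrow> \<exists>y\<in>J. y < x" using 3(4) by (meson not_le)
  have "filt ?B" unfolding filt_def
  proof (intro conjI allI impI)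
    show "UNIV \<in> ?B" using 3(2) by auto
    show "{} \<notin> ?B"
    proof
      assume "{} \<in> ?B"
      then obtain x where x: "x \<in> J" "J \<inter> {y. y < x} \<subseteq> {}" by blast
      from nomin[OF x(1)] obtain y where "y \<in> J" "y < x" by blast
      with x(2) show False by blast
    qed
  next
    fix A C assume "A \<in> ?B \<and> C \<in> ?B"
    then obtain a c where a: "a \<in> J" "J \<inter> {y. y < a} \<subseteq> A" and c: "c \<in> J" "J \<inter> {y. y < c} \<subseteq> C" by blast
    have "min a c \<in> J" using a c by (simp add: min_def)
    moreover have "J \<inter> {y. y < min a c} \<subseteq> A \<inter> C" using a c by auto
    ultimately show "A \<inter> C \<in> ?B" by (intro CollectI bexI)
  next
    fix A C assume "A \<in> ?B \<and> A \<subseteq> C" then show "C \<in> ?B" by blast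
  qed
  from uf_exists[OF this] obtain u where u: "ultrafilter_on u" and Bu: "?B \<subseteq> u" by blast
  obtain x0 where x0: "x0 \<in> J" using 3(2) by blast
  have "J \<in> ?B" using x0 by (intro CollectI bexI[of _ x0]) auto
  then have Ju: "J \<in> u" using Bu by blast
  have L: "Lu u = - J"
  proof
    show "- J \<subseteq> Lu u"
    proof
      fix x assume x: "x \<in> - J"
      have "J \<subseteq> {y. x < y}"
      proof
        fix y assume y: "y \<in> J"
        show "y \<in> {y. x < y}"
        proof (rule ccontr)
          assume "y \<notin> {y. x < y}"
          then have "y \<le> x" by simp
          then have "x \<in> J" using y 3(3) unfolding final_seg_def by blast
          with x show False by simp
        qed
      qed
      from uf_up[OF u Ju this] show "x \<in> Lu u" unfolding Lu_def by simp
    qed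
  next
    show "Lu u \<subseteq> - J"
    proof
      fix x assume x: "x \<in> Lu u"
      show "x \<in> - J"
      proof
        assume xJ: "x \<in> J"
        then have "{y. y < x} \<in> ?B" by (intro CollectI bexI[of _ x]) auto
        then have a: "{y. y < x} \<in> u" using Bu by blast
        have b: "{y. x < y} \<in> u" using x unfolding Lu_def by simp
        have "{y. y < x} \<inter> {y. x < y} = {}" by auto
        from uf_disj[OF u a b this] show False .
      qed
    qed
  qed
  have n0: "Lu u \<notin> u" using L Ju uf_compl[OF u, of J] by simp
  have np: "\<not> (\<exists>z. u = principal z)"
  proof
    assume "\<exists>z. u = principal z"
    then obtain z where z: "u = principal z" by blast
    then have "Lu u = {y. y < z}" using Lu_principal by simp
    then have e: "- J = {y. y < z}" using L by simp
    then have "z \<in> J" by auto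
    moreover have "\<forall>x\<in>J. z \<le> x"
    proof
      fix x assume "x \<in> J"
      then have "x \<notin> - J" by simp
      then have "x \<notin> {y. y < z}" unfolding e .
      then show "z \<le> x" by simp
    qed
    ultimately show False using 3(4) by blast
  qed
  have "skey (supp u) = (- J, 2)" using supp_key[OF u] L n0 np by (simp add: tag_def)
  then have "skey (supp u) = skey s" using 3(1) by simp
  then show ?thesis using skey_inj u by blast
qed




lemma bX: "u \<in> betaX \<longleftrightarrow> ultrafilter_on u" unfolding betaX_def by simp

lemma R_iff: "(u, v) \<in> tri_eq_rel \<longleftrightarrow> u \<in> betaX \<and> v \<in> betaX \<and> supp u = (supp v :: 'a::linorder support)"
  unfolding tri_eq_rel_def using tri_eq_supp bX by auto

lemma cls: "u \<in> betaX \<Longrightarrow> tri_eq_rel `` {u} = {v \<in> betaX. supp v = (supp u :: 'a::linorder support)}"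
  using R_iff by auto

lemma the_cls: assumes "u \<in> betaX"
  shows "the_elem (supp ` (tri_eq_rel `` {u})) = (supp u :: 'a::linorder support)"
proof -
  have "supp ` (tri_eq_rel `` {u}) = {supp u}" unfolding cls[OF assms] using assms by auto
  then show ?thesis by simp
qed

lemma R_equiv: "equiv betaX (tri_eq_rel :: ('a::linorder set set \<times> 'a set set) set)"
proof (rule equivI)
  show "(tri_eq_rel :: ('a::linorder set set \<times> 'a set set) set) \<subseteq> betaX \<times> betaX"
    unfolding tri_eq_rel_def by auto
  show "refl_on betaX (tri_eq_rel :: ('a::linorder set set \<times> 'a set set) set)"
    by (rule refl_onI) (auto simp: R_iff)
  show "sym (tri_eq_rel :: ('a::linorder set set \<times> 'a set set) set)"
    by (rule symI) (auto simp: R_iff)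
  show "trans (tri_eq_rel :: ('a::linorder set set \<times> 'a set set) set)"
    by (rule transI) (auto simp: R_iff)
qed

theorem corollary2:
  shows "(\<forall>u\<in>(betaX :: 'a::linorder set set set). \<forall>v\<in>betaX.
            (tri_le u v \<longleftrightarrow> supp_le (supp u) (supp v)) \<and>
            (tri_eq u v \<longleftrightarrow> supp u = supp v))
     \<and> (\<forall>u\<in>(betaX :: 'a set set set). tri_le u u)
     \<and> (\<forall>u\<in>(betaX :: 'a set set set). \<forall>v\<in>betaX. \<forall>w\<in>betaX.
            tri_le u v \<and> tri_le v w \<longrightarrow> tri_le u w)
     \<and> (\<forall>u\<in>(betaX :: 'a set set set). \<forall>v\<in>betaX. tri_le u v \<or> tri_le v u)
     \<and> equiv betaX (tri_eq_rel :: ('a set set \<times> 'a set set) set)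
     \<and> supp ` (betaX :: 'a set set set) = sX
     \<and> bij_betw (\<lambda>C. the_elem (supp ` C)) (betaX // (tri_eq_rel :: ('a set set \<times> 'a set set) set)) sX
     \<and> (\<forall>C\<in>betaX // (tri_eq_rel :: ('a set set \<times> 'a set set) set).
          \<forall>D\<in>betaX // (tri_eq_rel :: ('a set set \<times> 'a set set) set).
            ((\<exists>u\<in>C. \<exists>v\<in>D. tri_le u v) \<longleftrightarrow>
             supp_le (the_elem (supp ` C)) (the_elem (supp ` D))))"
proof -
  let ?R = "tri_eq_rel :: ('a set set \<times> 'a set set) set"
  have P1: "\<forall>u\<in>(betaX :: 'a set set set). \<forall>v\<in>betaX.
            (tri_le u v \<longleftrightarrow> supp_le (supp u) (supp v)) \<and> (tri_eq u v \<longleftrightarrow> supp u = supp v)"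
    using tri_supp tri_eq_supp bX by blast
  have P2: "\<forall>u\<in>(betaX :: 'a set set set). tri_le u u" using tri_refl bX by blast
  have P3: "\<forall>u\<in>(betaX :: 'a set set set). \<forall>v\<in>betaX. \<forall>w\<in>betaX.
            tri_le u v \<and> tri_le v w \<longrightarrow> tri_le u w" using tri_trans bX by blast
  have P4: "\<forall>u\<in>(betaX :: 'a set set set). \<forall>v\<in>betaX. tri_le u v \<or> tri_le v u"
    using tri_total bX by blast
  have P5: "equiv betaX ?R" by (rule R_equiv)
  have P6: "supp ` (betaX :: 'a set set set) = sX"
  proof
    show "supp ` (betaX :: 'a set set set) \<subseteq> sX" using supp_key bX by blast
  next
    show "sX \<subseteq> supp ` (betaX :: 'a set set set)"
    proof
      fix s :: "'a support" assume "s \<in> sX"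
      from surj_supp[OF this] obtain u where "ultrafilter_on u" "supp u = s" by blast
      then show "s \<in> supp ` betaX" using bX by blast
    qed
  qed
  have Q: "\<And>C. C \<in> betaX // ?R \<Longrightarrow> \<exists>u\<in>betaX. C = ?R `` {u} \<and> the_elem (supp ` C) = supp u"
    using the_cls by (auto elim!: quotientE)
  have P7: "bij_betw (\<lambda>C. the_elem (supp ` C)) (betaX // ?R) sX"
    unfolding bij_betw_def
  proof
    show "inj_on (\<lambda>C. the_elem (supp ` C)) (betaX // ?R)"
    proof (rule inj_onI)
      fix C D assume C: "C \<in> betaX // ?R" and D: "D \<in> betaX // ?R"
        and e: "the_elem (supp ` C) = the_elem (supp ` D)"
      from Q[OF C] obtain u where u: "u \<in> betaX" "C = ?R `` {u}" "the_elem (supp ` C) = supp u" by blast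
      from Q[OF D] obtain v where v: "v \<in> betaX" "D = ?R `` {v}" "the_elem (supp ` D) = supp v" by blast
      have "supp u = supp v" using e u v by simp
      then show "C = D" by (simp only: u(2) v(2) cls[OF u(1)] cls[OF v(1)])
    qed
  next
    show "(\<lambda>C. the_elem (supp ` C)) ` (betaX // ?R) = sX"
    proof
      show "(\<lambda>C. the_elem (supp ` C)) ` (betaX // ?R) \<subseteq> sX"
      proof
        fix s assume "s \<in> (\<lambda>C. the_elem (supp ` C)) ` (betaX // ?R)"
        then obtain C where C: "C \<in> betaX // ?R" "s = the_elem (supp ` C)" by blast
        from Q[OF C(1)] obtain u where u: "u \<in> betaX" "the_elem (supp ` C) = supp u" by blast
        have "supp u \<in> supp ` betaX" by (rule imageI[OF u(1)])
        then have "supp u \<in> sX" by (simp only: P6)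
        then show "s \<in> sX" using C(2) u(2) by simp
      qed
    next
      show "sX \<subseteq> (\<lambda>C. the_elem (supp ` C)) ` (betaX // ?R)"
      proof
        fix s assume "s \<in> (sX :: 'a support set)"
        then have "s \<in> supp ` betaX" by (simp only: P6)
        then obtain u where u: "u \<in> betaX" "supp u = s" by (rule imageE) simp
        have "?R `` {u} \<in> betaX // ?R" using u(1) by (rule quotientI)
        moreover have "s = the_elem (supp ` (?R `` {u}))" using the_cls[OF u(1)] u(2) by simp
        ultimately show "s \<in> (\<lambda>C. the_elem (supp ` C)) ` (betaX // ?R)" by (rule rev_image_eqI)
      qed
    qed
  qed
  have P8: "\<forall>C\<in>betaX // ?R. \<forall>D\<in>betaX // ?R.
            ((\<exists>u\<in>C. \<exists>v\<in>D. tri_le u v) \<longleftrightarrow> supp_le (the_elem (supp ` C)) (the_elem (supp ` D)))"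
  proof (intro ballI)
    fix C D assume C: "C \<in> betaX // ?R" and D: "D \<in> betaX // ?R"
    from Q[OF C] obtain u where u: "u \<in> betaX" "C = ?R `` {u}" "the_elem (supp ` C) = supp u" by blast
    from Q[OF D] obtain v where v: "v \<in> betaX" "D = ?R `` {v}" "the_elem (supp ` D) = supp v" by blast
    have Cm: "\<And>x. x \<in> C \<longleftrightarrow> x \<in> betaX \<and> supp x = supp u" using u cls by auto
    have Dm: "\<And>x. x \<in> D \<longleftrightarrow> x \<in> betaX \<and> supp x = supp v" using v cls by auto
    show "(\<exists>x\<in>C. \<exists>y\<in>D. tri_le x y) \<longleftrightarrow> supp_le (the_elem (supp ` C)) (the_elem (supp ` D))"
    proof
      assume "\<exists>x\<in>C. \<exists>y\<in>D. tri_le x y"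
      then obtain x y where xy: "x \<in> C" "y \<in> D" "tri_le x y" by blast
      have x: "x \<in> betaX" "supp x = supp u" using Cm xy(1) by blast+
      have y: "y \<in> betaX" "supp y = supp v" using Dm xy(2) by blast+
      have "supp_le (supp x) (supp y)" using P1 x(1) y(1) xy(3) by blast
      then show "supp_le (the_elem (supp ` C)) (the_elem (supp ` D))"
        by (simp only: u(3) v(3) x(2) y(2))
    next
      assume "supp_le (the_elem (supp ` C)) (the_elem (supp ` D))"
      then have "tri_le u v" using u v P1 by simp
      moreover have "u \<in> C" "v \<in> D" using Cm Dm u v by auto
      ultimately show "\<exists>x\<in>C. \<exists>y\<in>D. tri_le x y" by blast
    qed
  qed
  show ?thesis by (intro conjI P1 P2 P3 P4 P5 P6 P7 P8)
qed



end
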